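(* Let $n,m\ge 1$, let $\boldsymbol{W}=(w_{ij})\in\mathbb{R}^{n\times n}$ be a symmetric matrix with non-negative entries, let $\boldsymbol{S}=(s_{kr})\in[0,1]^{m\times m}$ be symmetric with $s_{kk}=0$ for all $k$, let $\boldsymbol{\gamma}=(\gamma_1,\dots,\gamma_m)\in\mathbb{R}^m$, $\boldsymbol{\rho}=(\rho_1,\dots,\rho_m)\in[\frac{\pi}{4},\frac{\pi}{2})^m$ and $\alpha\in\mathbb{R}$. Consider the HoMTask Hopfield network $\mathcal{H}=\langle \boldsymbol{W},\boldsymbol{\gamma},\boldsymbol{\rho},\boldsymbol{S}\rangle$ whose states are matrices $\boldsymbol{X}=(x_{ik})$, $1\le i\le n$, $1\le k\le m$, with $x_{ik}\in\{\sin\rho_k,-\cos\rho_k\}$, with energy $$E_{\mathcal{H}}(\boldsymbol{X})=\sum_{k=1}^m\Big(-\tfrac12 {\boldsymbol{x}^{(k)}}^T\boldsymbol{W}\boldsymbol{x}^{(k)}+\gamma_k\sum_{i=1}^n x_{ik}+\tfrac{\alpha}{2}\Big(S_k\sum_{i=1}^n x_{ik}^2-\sum_{r\ne k}s_{kr}\sum_{i=1}^n x_{ik}x_{ir}\Big)\Big),$$ where $\boldsymbol{x}^{(k)}$ is the $k$-th column of $\boldsymbol{X}$ and $S_k=\sum_{r=1}^m s_{kr}$. Under the asynchronous dynamics in which, at each time step, a single neuron $(i,k)$ is updated by $$x_{ik}(t+1)=\begin{cases}\sin\rho_k & \text{if } \phi_{ik}(t)>0,\\ -\cos\rho_k & \text{if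 } \phi_{ik}(t)\le 0,\end{cases}\qquad \phi_{ik}(t)=\sum_{j=1}^n w_{ij}x_{jk}(t)-\theta_{ik}+\alpha\sum_{r\ne k}s_{kr}x_{ir}(t),$$ with $\theta_{ik}=\gamma_k+\frac{\alpha S_k}{2}(\sin\rho_k-\cos\rho_k)$ (all other neurons unchanged, and all $nm$ neurons updated in random order in each block of $nm$ consecutive steps), the network, starting from any initial state, eventually reaches a stable state (a state that no further neuron update changes), and this stable state is a local minimum of $E_{\mathcal{H}}$.
   Context: A HoMTask network consists of $m$ copies (one per task $k$) of a Hopfield network on the same $n$ neurons with weights $\boldsymbol{W}$; copy $k$ has neuron activation values $\{\sin\rho_k,-\cos\rho_k\}$ and activation threshold $\gamma_k$, and neuron $i$ of copy $k$ is additionally coupled to neuron $i$ of copy $r$ with weight proportional to $\alpha s_{kr}$. Each update does not increase the energy, where a local minimum is understood as a state from which no single-neuron update (by the rule above) decreases the energy. *)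

theory Defs
  imports Complex_Main
begin

text \<open>HoMTask Hopfield network. Indices are 0-based: neurons i < n, tasks k < m.
  A state is X :: nat \<Rightarrow> nat \<Rightarrow> real, X i k = x_ik.\<close>

definition Ssum :: "nat \<Rightarrow> (nat \<Rightarrow> nat \<Rightarrow> real) \<Rightarrow> nat \<Rightarrow> real" where
  "Ssum m S k = (\<Sum>r<m. S k r)"

definition hm_state :: "nat \<Rightarrow> nat \<Rightarrow> (nat \<Rightarrow> real) \<Rightarrow> (nat \<Rightarrow> nat \<Rightarrow> real) \<Rightarrow> bool" where
  "hm_state n m \<rho> X \<longleftrightarrow> (\<forall>i<n. \<forall>k<m. X i k = sin (\<rho> k) \<or> X i k = - cos (\<rho> k))"

definition hm_energy ::
  "nat \<Rightarrow> nat \<Rightarrow> (nat \<Rightarrow> nat \<Rightarrow> real) \<Rightarrow> (nat \<Rightarrow> real) \<Rightarrow> (nat \<Rightarrow> nat \<Rightarrow> real) \<Rightarrow> real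
   \<Rightarrow> (nat \<Rightarrow> nat \<Rightarrow> real) \<Rightarrow> real" where
  "hm_energy n m W \<gamma> S \<alpha> X =
     (\<Sum>k<m. - (1/2) * (\<Sum>i<n. \<Sum>j<n. X i k * W i j * X j k)
            + \<gamma> k * (\<Sum>i<n. X i k)
            + (\<alpha> / 2) * (Ssum m S k * (\<Sum>i<n. (X i k)^2)
                        - (\<Sum>r\<in>{..<m} - {k}. S k r * (\<Sum>i<n. X i k * X i r))))"

definition hm_theta ::
  "nat \<Rightarrow> (nat \<Rightarrow> real) \<Rightarrow> (nat \<Rightarrow> real) \<Rightarrow> (nat \<Rightarrow> nat \<Rightarrow> real) \<Rightarrow> real \<Rightarrow> nat \<Rightarrow> real" where
  "hm_theta m \<gamma> \<rho> S \<alpha> k = \<gamma> k + \<alpha> * Ssum m S k / 2 * (sin (\<rho> k) - cos (\<rho> k))"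

definition hm_phi ::
  "nat \<Rightarrow> nat \<Rightarrow> (nat \<Rightarrow> nat \<Rightarrow> real) \<Rightarrow> (nat \<Rightarrow> real) \<Rightarrow> (nat \<Rightarrow> real) \<Rightarrow> (nat \<Rightarrow> nat \<Rightarrow> real)
   \<Rightarrow> real \<Rightarrow> (nat \<Rightarrow> nat \<Rightarrow> real) \<Rightarrow> nat \<Rightarrow> nat \<Rightarrow> real" where
  "hm_phi n m W \<gamma> \<rho> S \<alpha> X i k =
     (\<Sum>j<n. W i j * X j k) - hm_theta m \<gamma> \<rho> S \<alpha> k
     + \<alpha> * (\<Sum>r\<in>{..<m} - {k}. S k r * X i r)"

definition hm_update ::
  "nat \<Rightarrow> nat \<Rightarrow> (nat \<Rightarrow> nat \<Rightarrow> real) \<Rightarrow> (nat \<Rightarrow> real) \<Rightarrow> (nat \<Rightarrow> real) \<Rightarrow> (nat \<Rightarrow> nat \<Rightarrow> real)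
   \<Rightarrow> real \<Rightarrow> (nat \<Rightarrow> nat \<Rightarrow> real) \<Rightarrow> nat \<Rightarrow> nat \<Rightarrow> (nat \<Rightarrow> nat \<Rightarrow> real)" where
  "hm_update n m W \<gamma> \<rho> S \<alpha> X i k =
     (\<lambda>i' k'. if i' = i \<and> k' = k then
                 (if hm_phi n m W \<gamma> \<rho> S \<alpha> X i k > 0 then sin (\<rho> k) else - cos (\<rho> k))
               else X i' k')"

primrec hm_traj ::
  "nat \<Rightarrow> nat \<Rightarrow> (nat \<Rightarrow> nat \<Rightarrow> real) \<Rightarrow> (nat \<Rightarrow> real) \<Rightarrow> (nat \<Rightarrow> real) \<Rightarrow> (nat \<Rightarrow> nat \<Rightarrow> real)
   \<Rightarrow> real \<Rightarrow> (nat \<Rightarrow> nat \<times> nat) \<Rightarrow> (nat \<Rightarrow> nat \<Rightarrow> real) \<Rightarrow> nat \<Rightarrow> (nat \<Rightarrow> nat \<Rightarrow> real)" where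
  "hm_traj n m W \<gamma> \<rho> S \<alpha> \<sigma> X0 0 = X0"
| "hm_traj n m W \<gamma> \<rho> S \<alpha> \<sigma> X0 (Suc t) =
     hm_update n m W \<gamma> \<rho> S \<alpha> (hm_traj n m W \<gamma> \<rho> S \<alpha> \<sigma> X0 t) (fst (\<sigma> t)) (snd (\<sigma> t))"

definition hm_schedule :: "nat \<Rightarrow> nat \<Rightarrow> (nat \<Rightarrow> nat \<times> nat) \<Rightarrow> bool" where
  "hm_schedule n m \<sigma> \<longleftrightarrow>
     (\<forall>b. bij_betw (\<lambda>t. \<sigma> (b * (n * m) + t)) {..<n * m} ({..<n} \<times> {..<m}))"

definition hm_stable ::
  "nat \<Rightarrow> nat \<Rightarrow> (nat \<Rightarrow> nat \<Rightarrow> real) \<Rightarrow> (nat \<Rightarrow> real) \<Rightarrow> (nat \<Rightarrow> real) \<Rightarrow> (nat \<Rightarrow> nat \<Rightarrow> real)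
   \<Rightarrow> real \<Rightarrow> (nat \<Rightarrow> nat \<Rightarrow> real) \<Rightarrow> bool" where
  "hm_stable n m W \<gamma> \<rho> S \<alpha> X \<longleftrightarrow>
     (\<forall>i<n. \<forall>k<m. hm_update n m W \<gamma> \<rho> S \<alpha> X i k = X)"

definition hm_local_min ::
  "nat \<Rightarrow> nat \<Rightarrow> (nat \<Rightarrow> nat \<Rightarrow> real) \<Rightarrow> (nat \<Rightarrow> real) \<Rightarrow> (nat \<Rightarrow> real) \<Rightarrow> (nat \<Rightarrow> nat \<Rightarrow> real)
   \<Rightarrow> real \<Rightarrow> (nat \<Rightarrow> nat \<Rightarrow> real) \<Rightarrow> bool" where
  "hm_local_min n m W \<gamma> \<rho> S \<alpha> X \<longleftrightarrow>
     (\<forall>i<n. \<forall>k<m. \<not> hm_energy n m W \<gamma> S \<alpha> (hm_update n m W \<gamma> \<rho> S \<alpha> X i k)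
                      < hm_energy n m W \<gamma> S \<alpha> X)"

end

theory Submission imports Defs "HOL-Library.Product_Lexorder" begin

lemma sum_if_const: "(\<Sum>j\<in>A. if c then f j else 0) = (if c then sum f A else (0::real))"
  by simp

lemma lin_diff:
  fixes X :: "nat \<Rightarrow> nat \<Rightarrow> real"
  assumes i: "i < n" and k: "k < m"
  shows "(\<Sum>k'<m. g k' * (\<Sum>i'<n. X i' k' + (if i'=i \<and> k'=k then d else 0)))
       = (\<Sum>k'<m. g k' * (\<Sum>i'<n. X i' k')) + g k * d"
proof -
  have e: "\<And>i' k'. X i' k' + (if i'=i \<and> k'=k then d else 0) = X i' k' + (if k' = k then (if i' = i then d else 0) else 0)"
    by auto
  show ?thesis unfolding e sum.distrib using i k
    by (simp add: sum_if_const sum.distrib algebra_simps if_distrib[of "\<lambda>x. _ * x"] cong: if_cong)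
qed

lemma sq_diff:
  fixes X :: "nat \<Rightarrow> nat \<Rightarrow> real"
  assumes i: "i < n" and k: "k < m"
  shows "(\<Sum>k'<m. g k' * (\<Sum>i'<n. (X i' k' + (if i'=i \<and> k'=k then d else 0))^2))
       = (\<Sum>k'<m. g k' * (\<Sum>i'<n. (X i' k')^2)) + g k * (2 * X i k * d + d^2)"
proof -
  have e: "\<And>i' k'. (X i' k' + (if i'=i \<and> k'=k then d else 0))^2 = (X i' k')^2 + (if k' = k then (if i' = i then 2 * X i k * d + d^2 else 0) else 0)"
    by (auto simp: power2_eq_square algebra_simps)
  show ?thesis unfolding e sum.distrib using i k
    by (simp add: sum_if_const sum.distrib algebra_simps if_distrib[of "\<lambda>x. _ * x"] cong: if_cong)
qed

lemma cross_diff: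
  fixes X S :: "nat \<Rightarrow> nat \<Rightarrow> real"
  assumes i: "i < n" and k: "k < m" and Ssym: "\<forall>k<m. \<forall>r<m. S k r = S r k"
  shows "(\<Sum>k'<m. \<Sum>r\<in>{..<m} - {k'}. S k' r * (\<Sum>i'<n. (X i' k' + (if i'=i \<and> k'=k then d else 0)) * (X i' r + (if i'=i \<and> r=k then d else 0))))
       = (\<Sum>k'<m. \<Sum>r\<in>{..<m} - {k'}. S k' r * (\<Sum>i'<n. X i' k' * X i' r)) + 2 * d * (\<Sum>r\<in>{..<m} - {k}. S k r * X i r)"
proof -
  have e: "\<And>i' k' r. r \<noteq> k' \<Longrightarrow> S k' r * ((X i' k' + (if i'=i \<and> k'=k then d else 0)) * (X i' r + (if i'=i \<and> r=k then d else 0)))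
     = S k' r * X i' k' * X i' r + (if k' = k then (if i' = i then d * S k r * X i r else 0) else 0)
       + (if r = k then (if i' = i then d * S k' k * X i k' else 0) else 0)"
    by (auto simp: algebra_simps)
  have e2: "(\<Sum>k'<m. \<Sum>r\<in>{..<m} - {k'}. S k' r * (\<Sum>i'<n. (X i' k' + (if i'=i \<and> k'=k then d else 0)) * (X i' r + (if i'=i \<and> r=k then d else 0))))
     = (\<Sum>k'<m. \<Sum>r\<in>{..<m} - {k'}. \<Sum>i'<n. S k' r * X i' k' * X i' r + (if k' = k then (if i' = i then d * S k r * X i r else 0) else 0)
       + (if r = k then (if i' = i then d * S k' k * X i k' else 0) else 0))"
    by (intro sum.cong refl) (simp add: sum_distrib_left e)
  have e3: "(\<Sum>k'<m. \<Sum>r\<in>{..<m} - {k'}. \<Sum>i'<n. (if r = k then (if i' = i then d * S k' k * X i k' else 0) else 0))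
      = d * (\<Sum>r\<in>{..<m} - {k}. S k r * X i r)"
  proof -
    have "(\<Sum>k'<m. \<Sum>r\<in>{..<m} - {k'}. \<Sum>i'<n. (if r = k then (if i' = i then d * S k' k * X i k' else 0) else 0))
        = (\<Sum>k'<m. if k' \<noteq> k then d * S k' k * X i k' else 0)"
      using i k by (intro sum.cong refl) (simp add: sum_if_const)
    also have "\<dots> = (\<Sum>k'\<in>{..<m} - {k}. d * S k' k * X i k')"
      by (subst sum.If_cases) (auto intro!: sum.cong)
    also have "\<dots> = d * (\<Sum>r\<in>{..<m} - {k}. S k r * X i r)"
      unfolding sum_distrib_left using Ssym k by (intro sum.cong refl) auto
    finally show ?thesis .
  qed
  have e4: "(\<Sum>k'<m. \<Sum>r\<in>{..<m} - {k'}. \<Sum>i'<n. (if k' = k then (if i' = i then d * S k r * X i r else 0) else 0))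
      = d * (\<Sum>r\<in>{..<m} - {k}. S k r * X i r)"
    using i k by (simp add: sum_if_const sum_distrib_left mult.assoc)
  have e5: "(\<Sum>k'<m. \<Sum>r\<in>{..<m} - {k'}. \<Sum>i'<n. S k' r * X i' k' * X i' r)
     = (\<Sum>k'<m. \<Sum>r\<in>{..<m} - {k'}. S k' r * (\<Sum>i'<n. X i' k' * X i' r))"
    by (simp add: sum_distrib_left mult.assoc)
  show ?thesis unfolding e2 sum.distrib e3 e4 e5 by simp
qed
lemma quad_diff:
  fixes X W :: "nat \<Rightarrow> nat \<Rightarrow> real"
  assumes i: "i < n" and k: "k < m" and Wsym: "\<forall>i<n. \<forall>j<n. W i j = W j i"
  shows "(\<Sum>k'<m. \<Sum>i'<n. \<Sum>j<n. (X i' k' + (if i'=i \<and> k'=k then d else 0)) * W i' j * (X j k' + (if j=i \<and> k'=k then d else 0)))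
       = (\<Sum>k'<m. \<Sum>i'<n. \<Sum>j<n. X i' k' * W i' j * X j k') + 2*d*(\<Sum>j<n. W i j * X j k) + W i i * d^2"
proof -
  have e: "\<And>i' j k'. (X i' k' + (if i'=i \<and> k'=k then d else 0)) * W i' j * (X j k' + (if j=i \<and> k'=k then d else 0))
     = X i' k' * W i' j * X j k' + (if k' = k then (if i' = i then d * W i j * X j k else 0) else 0)
       + (if k' = k then (if j = i then d * W i' i * X i' k else 0) else 0)
       + (if k' = k then (if i' = i then (if j = i then d * W i i * d else 0) else 0) else 0)"
    by (auto simp: algebra_simps)
  have s2: "(\<Sum>i'<n. W i' i * X i' k) = (\<Sum>j<n. W i j * X j k)"
    using Wsym i by (intro sum.cong) auto
  show ?thesis
    unfolding e sum.distrib
    using i k s2 by (simp add: sum_if_const power2_eq_square algebra_simps flip: sum_distrib_left)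
qed

lemma energy_split:
  "hm_energy n m W \<gamma> S \<alpha> X = -(1/2)*(\<Sum>k'<m. \<Sum>i'<n. \<Sum>j<n. X i' k' * W i' j * X j k')
    + (\<Sum>k'<m. \<gamma> k' * (\<Sum>i'<n. X i' k'))
    + \<alpha>/2 * ((\<Sum>k'<m. Ssum m S k' * (\<Sum>i'<n. (X i' k')^2))
       - (\<Sum>k'<m. \<Sum>r\<in>{..<m}-{k'}. S k' r * (\<Sum>i'<n. X i' k' * X i' r)))"
  unfolding hm_energy_def sum.distrib sum_subtractf[symmetric] sum_distrib_left[symmetric] ..

lemma energy_upd:
  fixes X W S :: "nat \<Rightarrow> nat \<Rightarrow> real"
  assumes i: "i < n" and k: "k < m" and Wsym: "\<forall>i<n. \<forall>j<n. W i j = W j i"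
    and Ssym: "\<forall>k<m. \<forall>r<m. S k r = S r k"
  shows "hm_energy n m W \<gamma> S \<alpha> (\<lambda>i' k'. X i' k' + (if i'=i \<and> k'=k then d else 0))
    = hm_energy n m W \<gamma> S \<alpha> X - d * (\<Sum>j<n. W i j * X j k) - W i i * d^2 / 2 + \<gamma> k * d
      + \<alpha>/2 * (Ssum m S k * (2 * X i k * d + d^2) - 2 * d * (\<Sum>r\<in>{..<m} - {k}. S k r * X i r))"
  unfolding energy_split
  using quad_diff[OF i k Wsym, of X d] lin_diff[OF i k, of \<gamma> X d] sq_diff[OF i k, of "Ssum m S" X d]
    cross_diff[OF i k Ssym, of X d]
  by (simp add: algebra_simps)

lemma step:
  fixes X W S :: "nat \<Rightarrow> nat \<Rightarrow> real" and \<gamma> :: "nat \<Rightarrow> real" and \<alpha> :: real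
  assumes i: "i < n" and k: "k < m" and Wsym: "\<forall>i<n. \<forall>j<n. W i j = W j i"
    and Wpos: "\<forall>i<n. \<forall>j<n. W i j \<ge> 0"
    and Ssym: "\<forall>k<m. \<forall>r<m. S k r = S r k"
    and sp: "sin (\<rho> k) > 0" and cp: "cos (\<rho> k) > 0"
    and st: "X i k = sin (\<rho> k) \<or> X i k = - cos (\<rho> k)"
  defines "Y \<equiv> hm_update n m W \<gamma> \<rho> S \<alpha> X i k"
  shows "hm_energy n m W \<gamma> S \<alpha> Y \<le> hm_energy n m W \<gamma> S \<alpha> X \<and>
    (Y \<noteq> X \<longrightarrow> hm_energy n m W \<gamma> S \<alpha> Y < hm_energy n m W \<gamma> S \<alpha> X
        \<or> (X i k = sin (\<rho> k) \<and> Y i k = - cos (\<rho> k)))"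
proof -
  define \<phi> where "\<phi> = hm_phi n m W \<gamma> \<rho> S \<alpha> X i k"
  define b where "b = (if \<phi> > 0 then sin (\<rho> k) else - cos (\<rho> k))"
  define d where "d = b - X i k"
  have Yd: "Y = (\<lambda>i' k'. X i' k' + (if i'=i \<and> k'=k then d else 0))"
    unfolding Y_def hm_update_def d_def b_def \<phi>_def by (auto simp: fun_eq_iff)
  have Yik: "Y i k = b" unfolding Yd d_def by simp
  have ab: "d \<noteq> 0 \<Longrightarrow> X i k + b = sin (\<rho> k) - cos (\<rho> k)"
    using st unfolding d_def b_def by auto
  have E: "hm_energy n m W \<gamma> S \<alpha> Y = hm_energy n m W \<gamma> S \<alpha> X - d * \<phi> - W i i * d^2 / 2"
  proof -
    have "\<alpha>/2 * (Ssum m S k * (2 * X i k * d + d^2)) = \<alpha>/2 * Ssum m S k * (sin (\<rho> k) - cos (\<rho> k)) * d"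
    proof (cases "d = 0")
      case False
      have "2 * X i k * d + d^2 = d * (X i k + b)" unfolding d_def by (simp add: power2_eq_square algebra_simps)
      then show ?thesis using ab[OF False] by simp
    qed simp
    then show ?thesis
      unfolding Yd energy_upd[OF i k Wsym Ssym] \<phi>_def hm_phi_def hm_theta_def
      by (simp add: algebra_simps)
  qed
  have Wii: "W i i \<ge> 0" using Wpos i by auto
  have dphi: "d * \<phi> \<ge> 0" "d \<noteq> 0 \<Longrightarrow> \<phi> > 0 \<Longrightarrow> d * \<phi> > 0"
    using st sp cp unfolding d_def b_def by (auto intro: mult_nonpos_nonpos mult_pos_pos mult_nonneg_nonneg)
  have "W i i * d^2 \<ge> 0" using Wii by simp
  then have le: "hm_energy n m W \<gamma> S \<alpha> Y \<le> hm_energy n m W \<gamma> S \<alpha> X" using E dphi by simp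
  moreover have "Y \<noteq> X \<longrightarrow> hm_energy n m W \<gamma> S \<alpha> Y < hm_energy n m W \<gamma> S \<alpha> X
        \<or> (X i k = sin (\<rho> k) \<and> Y i k = - cos (\<rho> k))"
  proof
    assume "Y \<noteq> X"
    then have d0: "d \<noteq> 0" unfolding Yd by auto
    show "hm_energy n m W \<gamma> S \<alpha> Y < hm_energy n m W \<gamma> S \<alpha> X
        \<or> (X i k = sin (\<rho> k) \<and> Y i k = - cos (\<rho> k))"
    proof (cases "\<phi> > 0")
      case True
      then show ?thesis using E dphi(2)[OF d0 True] \<open>W i i * d^2 \<ge> 0\<close> by simp
    next
      case False
      then show ?thesis using Yik d0 st unfolding b_def d_def by auto
    qed
  qed
  ultimately show ?thesis by blast
qed

theorem theorem1:
  fixes n m :: nat and W S :: "nat \<Rightarrow> nat \<Rightarrow> real" and \<gamma> \<rho> :: "nat \<Rightarrow> real"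
    and \<alpha> :: real and \<sigma> :: "nat \<Rightarrow> nat \<times> nat" and X0 :: "nat \<Rightarrow> nat \<Rightarrow> real"
  assumes "n \<ge> 1" and "m \<ge> 1"
    and "\<forall>i<n. \<forall>j<n. W i j = W j i" and "\<forall>i<n. \<forall>j<n. W i j \<ge> 0"
    and "\<forall>k<m. \<forall>r<m. S k r = S r k" and "\<forall>k<m. \<forall>r<m. 0 \<le> S k r \<and> S k r \<le> 1"
    and "\<forall>k<m. S k k = 0"
    and "\<forall>k<m. pi / 4 \<le> \<rho> k \<and> \<rho> k < pi / 2"
    and "hm_state n m \<rho> X0"
    and "hm_schedule n m \<sigma>"
  shows "\<exists>T. hm_stable n m W \<gamma> \<rho> S \<alpha> (hm_traj n m W \<gamma> \<rho> S \<alpha> \<sigma> X0 T)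
           \<and> hm_local_min n m W \<gamma> \<rho> S \<alpha> (hm_traj n m W \<gamma> \<rho> S \<alpha> \<sigma> X0 T)"
proof -
  note Wsym = assms(3) and Wpos = assms(4) and Ssym = assms(5)
  define tr where "tr = hm_traj n m W \<gamma> \<rho> S \<alpha> \<sigma> X0"
  define E where "E = hm_energy n m W \<gamma> S \<alpha>"
  define N where "N = n * m"
  have N: "N > 0" unfolding N_def using assms(1,2) by simp
  have sp: "sin (\<rho> k) > 0" and cp: "cos (\<rho> k) > 0" if "k < m" for k
  proof -
    have "pi / 4 \<le> \<rho> k" "\<rho> k < pi / 2" using assms(8) that by auto
    then have "0 < \<rho> k" "\<rho> k < pi / 2" using pi_gt_zero by linarith+
    then show "sin (\<rho> k) > 0" "cos (\<rho> k) > 0"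
      by (auto intro!: sin_gt_zero cos_gt_zero_pi)
  qed
  have sched: "\<sigma> (b * N + t) \<in> {..<n} \<times> {..<m}" if "t < N" for b t
    using assms(10) that unfolding hm_schedule_def N_def bij_betw_def by auto
  have sig: "fst (\<sigma> t) < n \<and> snd (\<sigma> t) < m" for t
  proof -
    have "\<sigma> ((t div N) * N + t mod N) \<in> {..<n} \<times> {..<m}" by (rule sched) (use N in simp)
    moreover have "(t div N) * N + t mod N = t" by simp
    ultimately show ?thesis by (metis SigmaE lessThan_iff fst_conv snd_conv)
  qed
  have trS: "tr (Suc t) = hm_update n m W \<gamma> \<rho> S \<alpha> (tr t) (fst (\<sigma> t)) (snd (\<sigma> t))" for t
    unfolding tr_def by simp
  have state: "hm_state n m \<rho> (tr t)" for t
  proof (induction t)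
    case 0 then show ?case using assms(9) unfolding tr_def by simp
  next
    case (Suc t) then show ?case unfolding trS hm_state_def hm_update_def by auto
  qed
  have outside: "\<not> (i < n \<and> k < m) \<Longrightarrow> tr t i k = X0 i k" for t i k
  proof (induction t)
    case 0 then show ?case unfolding tr_def by simp
  next
    case (Suc t) then show ?case unfolding trS hm_update_def using sig[of t] by auto
  qed
  define R where "R = {X. hm_state n m \<rho> X \<and> (\<forall>i k. \<not> (i < n \<and> k < m) \<longrightarrow> X i k = X0 i k)}"
  define F where "F = (\<lambda>A i k. if i < n \<and> k < m then (if (i,k) \<in> A then sin (\<rho> k) else - cos (\<rho> k)) else X0 i k)"
  have "R \<subseteq> F ` Pow ({..<n} \<times> {..<m})"
  proof
    fix X assume X: "X \<in> R"
    have "X = F {p \<in> {..<n} \<times> {..<m}. X (fst p) (snd p) = sin (\<rho> (snd p))}"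
      using X unfolding R_def F_def hm_state_def by (auto simp: fun_eq_iff)
    then show "X \<in> F ` Pow ({..<n} \<times> {..<m})" by blast
  qed
  then have finR: "finite R" by (rule finite_subset) simp
  have trR: "tr t \<in> R" for t unfolding R_def using state outside by auto
  define g where "g = (\<lambda>X. card {p \<in> {..<n} \<times> {..<m}. X (fst p) (snd p) = sin (\<rho> (snd p))})"
  define P where "P = (\<lambda>X. (E X, g X))"
  define h where "h = (\<lambda>t. card {q \<in> P ` R. q < P (tr t)})"
  have Pstep: "P (tr (Suc t)) \<le> P (tr t) \<and> (tr (Suc t) \<noteq> tr t \<longrightarrow> P (tr (Suc t)) < P (tr t))" for t
  proof -
    obtain i k where ik: "\<sigma> t = (i, k)" by fastforce
    have i: "i < n" and k: "k < m" using sig[of t] ik by auto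
    have st: "tr t i k = sin (\<rho> k) \<or> tr t i k = - cos (\<rho> k)" using state[of t] i k unfolding hm_state_def by auto
    have Y: "tr (Suc t) = hm_update n m W \<gamma> \<rho> S \<alpha> (tr t) i k" using trS ik by simp
    note stp = step[where X="tr t" and \<rho>=\<rho> and \<gamma>=\<gamma> and \<alpha>=\<alpha>, OF i k Wsym Wpos Ssym sp[OF k] cp[OF k] st, folded Y E_def]
    have diff: "tr (Suc t) i' k' = tr t i' k'" if "(i', k') \<noteq> (i, k)" for i' k'
      using that unfolding Y hm_update_def by auto
    have gle: "g (tr (Suc t)) < g (tr t)" if "tr t i k = sin (\<rho> k)" "tr (Suc t) i k = - cos (\<rho> k)"
    proof -
      have ne: "sin (\<rho> k) \<noteq> - cos (\<rho> k)" using sp[OF k] cp[OF k] by simp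
      have "{p \<in> {..<n} \<times> {..<m}. tr (Suc t) (fst p) (snd p) = sin (\<rho> (snd p))}
          = {p \<in> {..<n} \<times> {..<m}. tr t (fst p) (snd p) = sin (\<rho> (snd p))} - {(i, k)}"
      proof (rule set_eqI)
        fix p :: "nat \<times> nat"
        obtain a c where p: "p = (a, c)" by fastforce
        show "p \<in> {p \<in> {..<n} \<times> {..<m}. tr (Suc t) (fst p) (snd p) = sin (\<rho> (snd p))} \<longleftrightarrow>
              p \<in> {p \<in> {..<n} \<times> {..<m}. tr t (fst p) (snd p) = sin (\<rho> (snd p))} - {(i, k)}"
        proof (cases "(a, c) = (i, k)")
          case True then show ?thesis using p that ne by auto
        next
          case False then show ?thesis using p diff[OF False] by auto
        qed
      qed
      moreover have mem: "(i, k) \<in> {p \<in> {..<n} \<times> {..<m}. tr t (fst p) (snd p) = sin (\<rho> (snd p))}"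
        using that i k by auto
      moreover have fin: "finite {p \<in> {..<n} \<times> {..<m}. tr t (fst p) (snd p) = sin (\<rho> (snd p))}" by simp
      ultimately show ?thesis unfolding g_def using card_Diff1_less[OF fin mem] by (simp only:)
    qed
    show ?thesis using stp gle unfolding P_def by (auto simp: less_eq_prod_def less_prod_def)
  qed
  have hstep: "h (Suc t) \<le> h t \<and> (tr (Suc t) \<noteq> tr t \<longrightarrow> h (Suc t) < h t)" for t
  proof -
    have fin: "finite {q \<in> P ` R. q < P (tr t)}" using finR by simp
    have sub: "{q \<in> P ` R. q < P (tr (Suc t))} \<subseteq> {q \<in> P ` R. q < P (tr t)}"
      using Pstep[of t] by auto
    have "h (Suc t) \<le> h t" unfolding h_def by (rule card_mono[OF fin sub])
    moreover have "h (Suc t) < h t" if "tr (Suc t) \<noteq> tr t"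
    proof -
      have "P (tr (Suc t)) \<in> {q \<in> P ` R. q < P (tr t)}" using Pstep[of t] that trR by auto
      moreover have "P (tr (Suc t)) \<notin> {q \<in> P ` R. q < P (tr (Suc t))}" by simp
      ultimately have "{q \<in> P ` R. q < P (tr (Suc t))} \<subset> {q \<in> P ` R. q < P (tr t)}" using sub by blast
      then show ?thesis unfolding h_def by (rule psubset_card_mono[OF fin])
    qed
    ultimately show ?thesis by blast
  qed
  obtain t0 where minh: "\<And>t. h t0 \<le> h t"
    using ex_has_least_nat[where P="\<lambda>_. True" and m=h] by blast
  have hle: "t0 \<le> t \<Longrightarrow> h t \<le> h t0" for t
  proof (induction t rule: dec_induct)
    case (step t) then show ?case using hstep[of t] by simp
  qed simp
  have const: "t0 \<le> t \<Longrightarrow> tr t = tr t0" for t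
  proof (induction t rule: dec_induct)
    case (step t)
    have "tr (Suc t) = tr t"
    proof (rule ccontr)
      assume "tr (Suc t) \<noteq> tr t"
      then have "h (Suc t) < h t" using hstep by blast
      then show False using hle[OF step(1)] minh[of "Suc t"] by simp
    qed
    then show ?case using step by simp
  qed simp
  have stable: "hm_stable n m W \<gamma> \<rho> S \<alpha> (tr t0)"
    unfolding hm_stable_def
  proof (intro allI impI)
    fix i k assume i: "i < n" and k: "k < m"
    have "(i, k) \<in> (\<lambda>t. \<sigma> (t0 * N + t)) ` {..<N}"
      using assms(10) i k unfolding hm_schedule_def N_def bij_betw_def by auto
    then obtain t' where t': "t' < N" "\<sigma> (t0 * N + t') = (i, k)" by auto
    define \<tau> where "\<tau> = t0 * N + t'"
    have ge: "t0 \<le> \<tau>" unfolding \<tau>_def using N by (simp add: trans_le_add1)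
    have "tr (Suc \<tau>) = hm_update n m W \<gamma> \<rho> S \<alpha> (tr \<tau>) i k" using trS t' unfolding \<tau>_def by simp
    then show "hm_update n m W \<gamma> \<rho> S \<alpha> (tr t0) i k = tr t0"
      using const[OF ge] const[of "Suc \<tau>"] ge by simp
  qed
  moreover have "hm_local_min n m W \<gamma> \<rho> S \<alpha> (tr t0)"
    using stable unfolding hm_stable_def hm_local_min_def by simp
  ultimately show ?thesis unfolding tr_def by blast
qed
end
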